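(* Let $\mathcal{C}$ be a strict monoidal category and $\mathcal{C}'$ a monoidal subcategory. Suppose there is an associative operation $\circledast\colon\mathrm{Hom}_\mathcal{C}(A,V)\otimes\mathrm{Hom}_\mathcal{C}(B,W)\to\mathrm{Hom}_\mathcal{C}(A\otimes B,V\otimes W)$ for all $A,B\in\mathrm{Ob}\,\mathcal{C}$, $V,W\in\mathrm{Ob}\,\mathcal{C}'$, which is natural in its $\mathcal{C}$-arguments, i.e. $(\phi\circ\alpha)\circledast(\psi\circ\beta)=(\phi\circledast\psi)\circ(\alpha\otimes\beta)$ for $\phi\in\mathrm{Hom}_\mathcal{C}(A,V)$, $\psi\in\mathrm{Hom}_\mathcal{C}(B,W)$, $\alpha,\beta$ morphisms of $\mathcal{C}$, and unital, i.e. $\phi\circledast\chi=\phi\otimes\chi$ and $\chi\circledast\phi=\chi\otimes\phi$ for every morphism $\phi$ and every $\chi\in\mathrm{Hom}_\mathcal{C}(B,1_\mathcal{C})$. Then the family $F_{V,W}:=\mathrm{id}_V\circledast\mathrm{id}_W\in\mathrm{End}_\mathcal{C}(V\otimes W)$, $V,W\in\mathrm{Ob}\,\mathcal{C}'$, is a cocycle in $\mathcal{C}'$. Moreover, this cocycle respects the morphisms of a subcategory $\mathcal{C}''\subset\mathcal{C}'$ if and only if $\circledast$ is natural with respect to $\mathcal{C}''$-arguments: $(\zeta\circ\phi)\circledast(\eta\circ\psi)=(\zeta\otimes\eta)\circ(\phi\circledast\psi)$ for $\phi\in\mathrm{Hom}_\mathcal{C}(A,V)$, $\psi\in\mathrm{Hom}_\mathcal{C}(B,W)$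 and $\zeta,\eta$ morphisms of $\mathcal{C}''$.
   Context: A cocycle (in the sense used here) is a family $F_{V,W}$ of morphisms of $V\otimes W$ satisfying $F_{U\otimes V,W}\circ(F_{U,V}\otimes\mathrm{id}_W)=F_{U,V\otimes W}\circ(\mathrm{id}_U\otimes F_{V,W})$ and $F_{V,1}=\mathrm{id}_V=F_{1,V}$, $1=1_\mathcal{C}$ the unit object. It respects morphisms of $\mathcal{C}''$ if $F_{V',W'}\circ(\zeta\otimes\eta)=(\zeta\otimes\eta)\circ F_{V,W}$ for all morphisms $\zeta\colon V\to V'$, $\eta\colon W\to W'$ of $\mathcal{C}''$. *)

theory Defs
  imports Main
begin

text \<open>A (possibly large-carrier) category is given by a set of objects, a set of
morphisms, source and target maps, a (partial, only meaningful on composable pairs)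
composition cmp g f = g o f, identities, and a strict tensor product on objects and
morphisms together with a unit object.\<close>

record ('o, 'm) smcat =
  obj :: "'o set"
  mor :: "'m set"
  src :: "'m \<Rightarrow> 'o"
  tgt :: "'m \<Rightarrow> 'o"
  cmp :: "'m \<Rightarrow> 'm \<Rightarrow> 'm"
  ident :: "'o \<Rightarrow> 'm"
  tobj :: "'o \<Rightarrow> 'o \<Rightarrow> 'o"
  tmor :: "'m \<Rightarrow> 'm \<Rightarrow> 'm"
  unit_obj :: "'o"

definition hom :: "('o, 'm) smcat \<Rightarrow> 'o \<Rightarrow> 'o \<Rightarrow> 'm set" where
  "hom C A B = {f \<in> mor C. src C f = A \<and> tgt C f = B}"

definition is_category :: "('o, 'm) smcat \<Rightarrow> bool" where
  "is_category C \<longleftrightarrow>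
     (\<forall>f \<in> mor C. src C f \<in> obj C \<and> tgt C f \<in> obj C) \<and>
     (\<forall>A \<in> obj C. ident C A \<in> hom C A A) \<and>
     (\<forall>f \<in> mor C. \<forall>g \<in> mor C. tgt C f = src C g \<longrightarrow>
        cmp C g f \<in> hom C (src C f) (tgt C g)) \<and>
     (\<forall>f \<in> mor C. cmp C f (ident C (src C f)) = f \<and> cmp C (ident C (tgt C f)) f = f) \<and>
     (\<forall>f \<in> mor C. \<forall>g \<in> mor C. \<forall>h \<in> mor C.
        tgt C f = src C g \<longrightarrow> tgt C g = src C h \<longrightarrow>
        cmp C h (cmp C g f) = cmp C (cmp C h g) f)"

definition strict_monoidal_category :: "('o, 'm) smcat \<Rightarrow> bool" where
  "strict_monoidal_category C \<longleftrightarrow>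
     is_category C \<and>
     unit_obj C \<in> obj C \<and>
     (\<forall>A \<in> obj C. \<forall>B \<in> obj C. tobj C A B \<in> obj C) \<and>
     (\<forall>f \<in> mor C. \<forall>g \<in> mor C.
        tmor C f g \<in> hom C (tobj C (src C f) (src C g)) (tobj C (tgt C f) (tgt C g))) \<and>
     (\<forall>A \<in> obj C. \<forall>B \<in> obj C. tmor C (ident C A) (ident C B) = ident C (tobj C A B)) \<and>
     (\<forall>f \<in> mor C. \<forall>f' \<in> mor C. \<forall>g \<in> mor C. \<forall>g' \<in> mor C.
        tgt C f = src C f' \<longrightarrow> tgt C g = src C g' \<longrightarrow>
        tmor C (cmp C f' f) (cmp C g' g) = cmp C (tmor C f' g') (tmor C f g)) \<and>
     (\<forall>A \<in> obj C. \<forall>B \<in> obj C. \<forall>D \<in> obj C.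
        tobj C (tobj C A B) D = tobj C A (tobj C B D)) \<and>
     (\<forall>f \<in> mor C. \<forall>g \<in> mor C. \<forall>h \<in> mor C.
        tmor C (tmor C f g) h = tmor C f (tmor C g h)) \<and>
     (\<forall>A \<in> obj C. tobj C (unit_obj C) A = A \<and> tobj C A (unit_obj C) = A) \<and>
     (\<forall>f \<in> mor C. tmor C (ident C (unit_obj C)) f = f \<and> tmor C f (ident C (unit_obj C)) = f)"

definition subcategory :: "('o, 'm) smcat \<Rightarrow> 'o set \<Rightarrow> 'm set \<Rightarrow> bool" where
  "subcategory C Ob' Mor' \<longleftrightarrow>
     Ob' \<subseteq> obj C \<and> Mor' \<subseteq> mor C \<and>
     (\<forall>f \<in> Mor'. src C f \<in> Ob' \<and> tgt C f \<in> Ob') \<and>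
     (\<forall>A \<in> Ob'. ident C A \<in> Mor') \<and>
     (\<forall>f \<in> Mor'. \<forall>g \<in> Mor'. tgt C f = src C g \<longrightarrow> cmp C g f \<in> Mor')"

definition monoidal_subcategory :: "('o, 'm) smcat \<Rightarrow> 'o set \<Rightarrow> 'm set \<Rightarrow> bool" where
  "monoidal_subcategory C Ob' Mor' \<longleftrightarrow>
     subcategory C Ob' Mor' \<and>
     unit_obj C \<in> Ob' \<and>
     (\<forall>A \<in> Ob'. \<forall>B \<in> Ob'. tobj C A B \<in> Ob') \<and>
     (\<forall>f \<in> Mor'. \<forall>g \<in> Mor'. tmor C f g \<in> Mor')"

definition cocycle :: "('o, 'm) smcat \<Rightarrow> 'o set \<Rightarrow> ('o \<Rightarrow> 'o \<Rightarrow> 'm) \<Rightarrow> bool" where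
  "cocycle C Ob' F \<longleftrightarrow>
     (\<forall>V \<in> Ob'. \<forall>W \<in> Ob'. F V W \<in> hom C (tobj C V W) (tobj C V W)) \<and>
     (\<forall>U \<in> Ob'. \<forall>V \<in> Ob'. \<forall>W \<in> Ob'.
        cmp C (F (tobj C U V) W) (tmor C (F U V) (ident C W))
        = cmp C (F U (tobj C V W)) (tmor C (ident C U) (F V W))) \<and>
     (\<forall>V \<in> Ob'. F V (unit_obj C) = ident C V \<and> F (unit_obj C) V = ident C V)"

definition respects_morphisms :: "('o, 'm) smcat \<Rightarrow> 'm set \<Rightarrow> ('o \<Rightarrow> 'o \<Rightarrow> 'm) \<Rightarrow> bool" where
  "respects_morphisms C Mor'' F \<longleftrightarrow>
     (\<forall>\<zeta> \<in> Mor''. \<forall>\<eta> \<in> Mor''.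
        cmp C (F (tgt C \<zeta>) (tgt C \<eta>)) (tmor C \<zeta> \<eta>)
        = cmp C (tmor C \<zeta> \<eta>) (F (src C \<zeta>) (src C \<eta>)))"

definition star_typed :: "('o, 'm) smcat \<Rightarrow> 'o set \<Rightarrow> ('m \<Rightarrow> 'm \<Rightarrow> 'm) \<Rightarrow> bool" where
  "star_typed C Ob' op \<longleftrightarrow>
     (\<forall>A \<in> obj C. \<forall>B \<in> obj C. \<forall>V \<in> Ob'. \<forall>W \<in> Ob'. \<forall>\<phi> \<in> hom C A V. \<forall>\<psi> \<in> hom C B W.
        op \<phi> \<psi> \<in> hom C (tobj C A B) (tobj C V W))"

definition star_assoc :: "('o, 'm) smcat \<Rightarrow> 'o set \<Rightarrow> ('m \<Rightarrow> 'm \<Rightarrow> 'm) \<Rightarrow> bool" where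
  "star_assoc C Ob' op \<longleftrightarrow>
     (\<forall>\<phi> \<in> mor C. \<forall>\<psi> \<in> mor C. \<forall>\<xi> \<in> mor C.
        tgt C \<phi> \<in> Ob' \<longrightarrow> tgt C \<psi> \<in> Ob' \<longrightarrow> tgt C \<xi> \<in> Ob' \<longrightarrow>
        op (op \<phi> \<psi>) \<xi> = op \<phi> (op \<psi> \<xi>))"

definition star_natural_C :: "('o, 'm) smcat \<Rightarrow> 'o set \<Rightarrow> ('m \<Rightarrow> 'm \<Rightarrow> 'm) \<Rightarrow> bool" where
  "star_natural_C C Ob' op \<longleftrightarrow>
     (\<forall>\<phi> \<in> mor C. \<forall>\<psi> \<in> mor C. \<forall>\<alpha> \<in> mor C. \<forall>\<beta> \<in> mor C.
        tgt C \<phi> \<in> Ob' \<longrightarrow> tgt C \<psi> \<in> Ob' \<longrightarrow>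
        tgt C \<alpha> = src C \<phi> \<longrightarrow> tgt C \<beta> = src C \<psi> \<longrightarrow>
        op (cmp C \<phi> \<alpha>) (cmp C \<psi> \<beta>) = cmp C (op \<phi> \<psi>) (tmor C \<alpha> \<beta>))"

definition star_unital :: "('o, 'm) smcat \<Rightarrow> 'o set \<Rightarrow> ('m \<Rightarrow> 'm \<Rightarrow> 'm) \<Rightarrow> bool" where
  "star_unital C Ob' op \<longleftrightarrow>
     (\<forall>\<phi> \<in> mor C. \<forall>\<chi> \<in> mor C.
        tgt C \<phi> \<in> Ob' \<longrightarrow> tgt C \<chi> = unit_obj C \<longrightarrow>
        op \<phi> \<chi> = tmor C \<phi> \<chi> \<and> op \<chi> \<phi> = tmor C \<chi> \<phi>)"

definition star_natural_sub :: "('o, 'm) smcat \<Rightarrow> 'm set \<Rightarrow> ('m \<Rightarrow> 'm \<Rightarrow> 'm) \<Rightarrow> bool" where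
  "star_natural_sub C Mor'' op \<longleftrightarrow>
     (\<forall>\<phi> \<in> mor C. \<forall>\<psi> \<in> mor C. \<forall>\<zeta> \<in> Mor''. \<forall>\<eta> \<in> Mor''.
        tgt C \<phi> = src C \<zeta> \<longrightarrow> tgt C \<psi> = src C \<eta> \<longrightarrow>
        op (cmp C \<zeta> \<phi>) (cmp C \<eta> \<psi>) = cmp C (tmor C \<zeta> \<eta>) (op \<phi> \<psi>))"

end

theory Submission
  imports Defs
begin

theorem lemma6p1:
  fixes C :: "('o, 'm) smcat"
    and Ob' :: "'o set" and Mor' :: "'m set"
    and op :: "'m \<Rightarrow> 'm \<Rightarrow> 'm"
  assumes "strict_monoidal_category C"
    and "monoidal_subcategory C Ob' Mor'"
    and "star_typed C Ob' op"
    and "star_assoc C Ob' op"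
    and "star_natural_C C Ob' op"
    and "star_unital C Ob' op"
  shows "cocycle C Ob' (\<lambda>V W. op (ident C V) (ident C W))
    \<and> (\<forall>(Ob'' :: 'o set) (Mor'' :: 'm set).
         subcategory C Ob'' Mor'' \<and> Ob'' \<subseteq> Ob' \<and> Mor'' \<subseteq> Mor' \<longrightarrow>
         (respects_morphisms C Mor'' (\<lambda>V W. op (ident C V) (ident C W))
          \<longleftrightarrow> star_natural_sub C Mor'' op))"
proof -
  note sm = assms(1)[unfolded strict_monoidal_category_def is_category_def hom_def]
  note ms = assms(2)[unfolded monoidal_subcategory_def subcategory_def]
  note ty = assms(3)[unfolded star_typed_def hom_def]
  note as = assms(4)[unfolded star_assoc_def]
  note nc = assms(5)[unfolded star_natural_C_def]
  note un = assms(6)[unfolded star_unital_def]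
  define F where "F = (\<lambda>V W. op (ident C V) (ident C W))"
  have ObC: "A \<in> obj C" if "A \<in> Ob'" for A using ms that by blast
  have idm: "ident C A \<in> mor C" "src C (ident C A) = A" "tgt C (ident C A) = A"
    if "A \<in> obj C" for A using sm that by auto
  have lid: "cmp C (ident C (tgt C f)) f = f" and rid: "cmp C f (ident C (src C f)) = f"
    if "f \<in> mor C" for f using sm that by auto
  have tobjO: "tobj C A B \<in> Ob'" if "A \<in> Ob'" "B \<in> Ob'" for A B using ms that by blast
  have Fty: "F V W \<in> mor C" "src C (F V W) = tobj C V W" "tgt C (F V W) = tobj C V W"
    if "V \<in> Ob'" "W \<in> Ob'" for V W
    using ty that ObC[OF that(1)] ObC[OF that(2)] idm[OF ObC[OF that(1)]] idm[OF ObC[OF that(2)]]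
    unfolding F_def by auto
  have opid: "op \<phi> \<psi> = cmp C (F (tgt C \<phi>) (tgt C \<psi>)) (tmor C \<phi> \<psi>)"
    if "\<phi> \<in> mor C" "\<psi> \<in> mor C" "tgt C \<phi> \<in> Ob'" "tgt C \<psi> \<in> Ob'" for \<phi> \<psi>
  proof -
    have "op (cmp C (ident C (tgt C \<phi>)) \<phi>) (cmp C (ident C (tgt C \<psi>)) \<psi>)
        = cmp C (F (tgt C \<phi>) (tgt C \<psi>)) (tmor C \<phi> \<psi>)"
      unfolding F_def
      using nc that idm[OF ObC[OF that(3)]] idm[OF ObC[OF that(4)]] by auto
    thus ?thesis using lid that by simp
  qed
  have opid2: "op \<phi> \<psi> = cmp C (op (ident C (src C \<zeta>)) (ident C (src C \<eta>))) (tmor C \<phi> \<psi>)"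
    if "\<phi> \<in> mor C" "\<psi> \<in> mor C" "src C \<zeta> \<in> Ob'" "src C \<eta> \<in> Ob'"
      "tgt C \<phi> = src C \<zeta>" "tgt C \<psi> = src C \<eta>" for \<phi> \<psi> \<zeta> \<eta>
    using opid[OF that(1,2)] that unfolding F_def by simp
  have coc: "cocycle C Ob' F"
    unfolding cocycle_def
  proof (intro conjI ballI)
    fix V W assume "V \<in> Ob'" "W \<in> Ob'"
    thus "F V W \<in> hom C (tobj C V W) (tobj C V W)" using Fty unfolding hom_def by auto
  next
    fix U V W assume u: "U \<in> Ob'" and v: "V \<in> Ob'" and w: "W \<in> Ob'"
    have "cmp C (F (tobj C U V) W) (tmor C (F U V) (ident C W)) = op (F U V) (ident C W)"
      using opid[of "F U V" "ident C W"] Fty[OF u v] idm[OF ObC[OF w]] tobjO[OF u v] w by simp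
    also have "\<dots> = op (ident C U) (F V W)"
      unfolding F_def using as idm ObC u v w by simp
    also have "\<dots> = cmp C (F U (tobj C V W)) (tmor C (ident C U) (F V W))"
      using opid[of "ident C U" "F V W"] Fty[OF v w] idm[OF ObC[OF u]] tobjO[OF v w] u by simp
    finally show "cmp C (F (tobj C U V) W) (tmor C (F U V) (ident C W))
        = cmp C (F U (tobj C V W)) (tmor C (ident C U) (F V W))" .
  next
    fix V assume v: "V \<in> Ob'"
    have u1: "unit_obj C \<in> obj C" using sm by blast
    have "F V (unit_obj C) = tmor C (ident C V) (ident C (unit_obj C))"
      unfolding F_def using un idm[OF ObC[OF v]] idm[OF u1] v by simp
    also have "\<dots> = ident C V" using sm idm[OF ObC[OF v]] by blast
    finally show "F V (unit_obj C) = ident C V" .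
  next
    fix V assume v: "V \<in> Ob'"
    have u1: "unit_obj C \<in> obj C" using sm by blast
    have "F (unit_obj C) V = tmor C (ident C (unit_obj C)) (ident C V)"
      unfolding F_def using un idm[OF ObC[OF v]] idm[OF u1] v by simp
    also have "\<dots> = ident C V" using sm idm[OF ObC[OF v]] by blast
    finally show "F (unit_obj C) V = ident C V" .
  qed
  have part2: "respects_morphisms C Mor'' F \<longleftrightarrow> star_natural_sub C Mor'' op"
    if "subcategory C Ob'' Mor''" "Ob'' \<subseteq> Ob'" "Mor'' \<subseteq> Mor'" for Ob'' Mor''
  proof -
    have M: "\<zeta> \<in> mor C" "src C \<zeta> \<in> Ob'" "tgt C \<zeta> \<in> Ob'" if "\<zeta> \<in> Mor''" for \<zeta>
      using ms \<open>Mor'' \<subseteq> Mor'\<close> that by blast+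
    have tm: "tmor C f g \<in> mor C" "src C (tmor C f g) = tobj C (src C f) (src C g)"
      "tgt C (tmor C f g) = tobj C (tgt C f) (tgt C g)"
      if "f \<in> mor C" "g \<in> mor C" for f g using sm that by auto
    have cm: "cmp C g f \<in> mor C" "src C (cmp C g f) = src C f" "tgt C (cmp C g f) = tgt C g"
      if "f \<in> mor C" "g \<in> mor C" "tgt C f = src C g" for f g using sm that by auto
    have ca: "cmp C h (cmp C g f) = cmp C (cmp C h g) f"
      if "f \<in> mor C" "g \<in> mor C" "h \<in> mor C" "tgt C f = src C g" "tgt C g = src C h" for f g h
    proof -
      have cat: "is_category C" using assms(1) unfolding strict_monoidal_category_def by simp
      have "\<forall>f \<in> mor C. \<forall>g \<in> mor C. \<forall>h \<in> mor C.
        tgt C f = src C g \<longrightarrow> tgt C g = src C h \<longrightarrow>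
        cmp C h (cmp C g f) = cmp C (cmp C h g) f" using cat unfolding is_category_def by blast
      thus ?thesis using that by blast
    qed
    show ?thesis
    proof
      assume r: "respects_morphisms C Mor'' F"
      show "star_natural_sub C Mor'' op"
        unfolding star_natural_sub_def
      proof (intro ballI impI)
        fix \<phi> \<psi> \<zeta> \<eta> assume p: "\<phi> \<in> mor C" and q: "\<psi> \<in> mor C" and z: "\<zeta> \<in> Mor''"
          and e: "\<eta> \<in> Mor''" and t1: "tgt C \<phi> = src C \<zeta>" and t2: "tgt C \<psi> = src C \<eta>"
        note Mz = M[OF z] and Me = M[OF e]
        have "op (cmp C \<zeta> \<phi>) (cmp C \<eta> \<psi>) = cmp C (op \<zeta> \<eta>) (tmor C \<phi> \<psi>)"
          using nc p q Mz Me t1 t2 by auto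
        also have "op \<zeta> \<eta> = cmp C (F (tgt C \<zeta>) (tgt C \<eta>)) (tmor C \<zeta> \<eta>)"
          using opid Mz Me by simp
        also have "\<dots> = cmp C (tmor C \<zeta> \<eta>) (F (src C \<zeta>) (src C \<eta>))"
          using r z e unfolding respects_morphisms_def by blast
        also have "cmp C \<dots> (tmor C \<phi> \<psi>) = cmp C (tmor C \<zeta> \<eta>) (cmp C (F (src C \<zeta>) (src C \<eta>)) (tmor C \<phi> \<psi>))"
          using ca[of "tmor C \<phi> \<psi>" "F (src C \<zeta>) (src C \<eta>)" "tmor C \<zeta> \<eta>"]
            tm[OF p q] tm[OF Mz(1) Me(1)] Fty[OF Mz(2) Me(2)] t1 t2 by simp
        also have "cmp C (F (src C \<zeta>) (src C \<eta>)) (tmor C \<phi> \<psi>) = op \<phi> \<psi>"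
          using opid2[OF p q Mz(2) Me(2) t1 t2] unfolding F_def by simp
        finally show "op (cmp C \<zeta> \<phi>) (cmp C \<eta> \<psi>) = cmp C (tmor C \<zeta> \<eta>) (op \<phi> \<psi>)" .
      qed
    next
      assume s: "star_natural_sub C Mor'' op"
      show "respects_morphisms C Mor'' F"
        unfolding respects_morphisms_def
      proof (intro ballI)
        fix \<zeta> \<eta> assume z: "\<zeta> \<in> Mor''" and e: "\<eta> \<in> Mor''"
        note Mz = M[OF z] and Me = M[OF e]
        have "cmp C (F (tgt C \<zeta>) (tgt C \<eta>)) (tmor C \<zeta> \<eta>) = op \<zeta> \<eta>"
          using opid Mz Me by simp
        also have "\<dots> = op (cmp C \<zeta> (ident C (src C \<zeta>))) (cmp C \<eta> (ident C (src C \<eta>)))"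
          using rid Mz Me by simp
        also have "\<dots> = cmp C (tmor C \<zeta> \<eta>) (F (src C \<zeta>) (src C \<eta>))"
          unfolding F_def using s z e idm[OF ObC[OF Mz(2)]] idm[OF ObC[OF Me(2)]]
          unfolding star_natural_sub_def by blast
        finally show "cmp C (F (tgt C \<zeta>) (tgt C \<eta>)) (tmor C \<zeta> \<eta>)
            = cmp C (tmor C \<zeta> \<eta>) (F (src C \<zeta>) (src C \<eta>))" .
      qed
    qed
  qed
  show ?thesis using coc part2 unfolding F_def by blast
qed

end
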